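(* Let $L\ge 2$ and $N_{\mathrm{em}}\ge1$ be integers and $p_{\mathrm{src}}\in[0,1]$. Let $\bm{\nu}=\{\nu_0,\dots,\nu_L\}$ be non-negative constants with $\nu_M=0$ for all $M<Lp_{\mathrm{src}}$. Suppose $\eta_1,\delta_1$ satisfy $$\max_{Q\in\mathcal{Q}}2^{-N_{\mathrm{em}}D(Q\|\mathfrak{b}_{L,p_{\mathrm{src}}})}\le\eta_1,\qquad \mathcal{Q}:=\{Q\in\mathcal{P}_{\mathcal{M}}: \mathbb{E}_{M\sim Q}[\nu_M]\ge\mathbb{E}_{M\sim\mathfrak{b}_{L,p_{\mathrm{src}}}}[\nu_M]+\delta_1\}.$$ If the random variables $(\bm{v},N,m^N,u^N,x^N)$ described in the context satisfy conditions (A) and (B), then $$\Pr\{N\ge1,\ \tilde P_{m^N,u^N,x^N}\notin\mathcal{P}^{N,\bm{\nu},\delta_1}\}\le\eta_1.$$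
   Context: For a finite set $\Omega$, $\mathcal{P}_\Omega$ denotes the set of probability mass functions on $\Omega$; for $\omega^n\in\Omega^n$ the type is $\tilde P_{\omega^n}(\omega)=\frac1n|\{i:\omega_i=\omega\}|$ ($\tilde P_{m^N,u^N,x^N}$ is the type of the sequence of triples $(m_k,u_k,x_k)$). Let $\mathcal{M}=\{0,\dots,L\}$, $\mathcal{U}=\mathcal{X}=\{0,1\}$, $\mathcal{W}=\{(M,U,X)\in\mathcal{M}\times\mathcal{U}\times\mathcal{X}:0\le M-U-X\le L-2\}$; for $P\in\mathcal{P}_{\mathcal{W}}$, $P_{\mathcal{M}}$ is the distribution of the first coordinate. $\mathfrak{b}_{L,p}(M):=\binom{L}{M}p^M(1-p)^{L-M}$; $D$ is the Kullback–Leibler divergence (base 2). Random variables: on a common probability space (probability $\Pr$), $\bm{v}=(v_0,\dots,v_L)$ are non-negative integers summing to $N_{\mathrm{em}}$, $N$ is a non-negative integer, and when $N\ge1$, $m^N\in\mathcal{M}^N$, $u^N\in\mathcal{U}^N$, $x^N\in\mathcal{X}^N$ with $(m_k,u_k,x_k)\in\mathcal{W}$. (A) There is $p_{\mathrm{odd}}\le p_{\mathrm{src}}$ with $\Pr\{\bm{v}\}=\frac{N_{\mathrm{em}}!}{\prod_M v_M!}\prod_M(\mathfrak{b}_{L,p_{\mathrm{odd}}}(M))^{v_M}$. (B) For all $M\in\mathcal{M}$, $\Pr\{N\tilde P_{m^N}(M)\le v_M\mid N\ge1\}=1$. $\mathcal{P}^{N,\bm{\nu},\delta_1}:=\{P\in\mathcal{P}_{\mathcal{W}}:\mathbb{E}_{M\sim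 P_{\mathcal{M}}}[\nu_M]\le\frac{N_{\mathrm{em}}}{N}(\mathbb{E}_{M\sim\mathfrak{b}_{L,p_{\mathrm{src}}}}[\nu_M]+\delta_1)\}$. *)

theory Defs
  imports "HOL-Probability.Probability"
begin

definition binom_mass :: "nat \<Rightarrow> real \<Rightarrow> nat \<Rightarrow> real" where
  "binom_mass L p M = real (L choose M) * p ^ M * (1 - p) ^ (L - M)"

definition is_pmf_on :: "'b set \<Rightarrow> ('b \<Rightarrow> real) \<Rightarrow> bool" where
  "is_pmf_on A Q \<longleftrightarrow> (\<forall>a. 0 \<le> Q a) \<and> (\<forall>a. a \<notin> A \<longrightarrow> Q a = 0) \<and> (\<Sum>a\<in>A. Q a) = 1"

definition Walph :: "nat \<Rightarrow> (nat \<times> nat \<times> nat) set" where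
  "Walph L = {(M, U, X). M \<le> L \<and> U \<le> 1 \<and> X \<le> 1 \<and>
      0 \<le> int M - int U - int X \<and> int M - int U - int X \<le> int L - 2}"

definition expect_on :: "'b set \<Rightarrow> ('b \<Rightarrow> real) \<Rightarrow> ('b \<Rightarrow> real) \<Rightarrow> real" where
  "expect_on A Q f = (\<Sum>a\<in>A. Q a * f a)"

definition kl_div :: "'b set \<Rightarrow> ('b \<Rightarrow> real) \<Rightarrow> ('b \<Rightarrow> real) \<Rightarrow> ereal" where
  "kl_div A Q P =
     (if \<exists>a\<in>A. Q a > 0 \<and> P a = 0 then \<infinity>
      else ereal (\<Sum>a\<in>A. if Q a = 0 then 0 else Q a * log 2 (Q a / P a)))"

definition exp2_neg :: "real \<Rightarrow> ereal \<Rightarrow> real" where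
  "exp2_neg n D = (if D = \<infinity> then 0 else 2 powr (- n * real_of_ereal D))"

definition marginal_M :: "(nat \<times> nat \<times> nat \<Rightarrow> real) \<Rightarrow> nat \<Rightarrow> real" where
  "marginal_M P M = (\<Sum>U\<le>1. \<Sum>X\<le>1. P (M, U, X))"

definition emp_type :: "nat \<Rightarrow> (nat \<Rightarrow> 'b) \<Rightarrow> 'b \<Rightarrow> real" where
  "emp_type n w a = real (card {k. k < n \<and> w k = a}) / real n"

definition calQ :: "nat \<Rightarrow> real \<Rightarrow> (nat \<Rightarrow> real) \<Rightarrow> real \<Rightarrow> (nat \<Rightarrow> real) set" where
  "calQ L psrc nu \<delta>1 = {Q. is_pmf_on {..L} Q \<and>
      expect_on {..L} Q nu \<ge> expect_on {..L} (binom_mass L psrc) nu + \<delta>1}"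

definition calP :: "nat \<Rightarrow> nat \<Rightarrow> nat \<Rightarrow> real \<Rightarrow> (nat \<Rightarrow> real) \<Rightarrow> real
                     \<Rightarrow> (nat \<times> nat \<times> nat \<Rightarrow> real) set" where
  "calP L Nem N psrc nu \<delta>1 = {P. is_pmf_on (Walph L) P \<and>
      expect_on {..L} (marginal_M P) nu
        \<le> real Nem / real N * (expect_on {..L} (binom_mass L psrc) nu + \<delta>1)}"

end

theory Submission
  imports Defs
begin

definition Sc :: "'b set \<Rightarrow> nat \<Rightarrow> ('b \<Rightarrow> nat) set" where
  "Sc I n = {w. (\<forall>i. i \<notin> I \<longrightarrow> w i = 0) \<and> sum w I = n}"

lemma Sc_finite: assumes "finite I" shows "finite (Sc I n)"
proof -
  have "Sc I n \<subseteq> (\<lambda>g i. if i \<in> I then g i else 0) ` (PiE I (\<lambda>_. {..n}))"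
  proof
    fix w assume w: "w \<in> Sc I n"
    have le: "w i \<le> n" if "i \<in> I" for i
      using w that assms unfolding Sc_def by (metis (mono_tags) mem_Collect_eq member_le_sum zero_le)
    show "w \<in> (\<lambda>g i. if i \<in> I then g i else 0) ` (PiE I (\<lambda>_. {..n}))"
    proof
      show "w = (\<lambda>i. if i \<in> I then restrict w I i else 0)" using w unfolding Sc_def by auto
      show "restrict w I \<in> PiE I (\<lambda>_. {..n})" using le by auto
    qed
  qed
  moreover have "finite (PiE I (\<lambda>_. {..n}))" using assms by (simp add: finite_PiE)
  ultimately show ?thesis by (meson finite_imageI finite_subset)
qed

lemma Sc_insert:
  assumes "j \<notin> I" "finite I"
  shows "Sc (insert j I) n = (\<lambda>(k,w). w(j:=k)) ` (SIGMA k:{..n}. Sc I (n-k))"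
proof (intro set_eqI iffI)
  fix w assume w: "w \<in> Sc (insert j I) n"
  show "w \<in> (\<lambda>(k,w). w(j:=k)) ` (SIGMA k:{..n}. Sc I (n-k))"
  proof
    have s: "sum w (insert j I) = n" using w unfolding Sc_def by auto
    have "sum (w(j:=0)) I = sum w I" using assms by (intro sum.cong) auto
    moreover have "sum w (insert j I) = w j + sum w I" using assms by simp
    ultimately show "(w j, w(j:=0)) \<in> (SIGMA k:{..n}. Sc I (n-k))" using w s unfolding Sc_def by auto
  qed auto
next
  fix w' assume "w' \<in> (\<lambda>(k,w). w(j:=k)) ` (SIGMA k:{..n}. Sc I (n-k))"
  then obtain k w where k: "k \<le> n" and w: "w \<in> Sc I (n-k)" and w': "w' = w(j:=k)" by auto
  have "sum w' I = sum w I" using assms w' by (intro sum.cong) auto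
  then show "w' \<in> Sc (insert j I) n" using w k w' assms unfolding Sc_def
    by (auto simp: sum.insert)
qed

lemma Sc_empty: "Sc {} n = (if n = 0 then {\<lambda>_. 0} else {})"
  unfolding Sc_def by auto

lemma Sc_inj:
  assumes "j \<notin> I"
  shows "inj_on (\<lambda>(k,w). w(j:=k)) (SIGMA k:{..n}. Sc I (n-k))"
proof (rule inj_onI, clarify)
  fix k w k' w' assume "w \<in> Sc I (n-k)" "w' \<in> Sc I (n-k')" and eq: "w(j:=k) = w'(j:=k')"
  then have "w j = 0" "w' j = 0" using assms unfolding Sc_def by auto
  moreover have "k = k'" using fun_cong[OF eq, of j] by simp
  ultimately show "k = k' \<and> w = w'" using eq by (metis fun_upd_triv fun_upd_upd)
qed

lemma multinomial:
  fixes a :: "'b \<Rightarrow> real"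
  assumes "finite I"
  shows "(sum a I)^n = (\<Sum>w\<in>Sc I n. fact n / (\<Prod>i\<in>I. fact (w i)) * (\<Prod>i\<in>I. a i ^ w i))"
  using assms
proof (induction I arbitrary: n rule: finite_induct)
  case empty
  then show ?case by (simp add: Sc_empty)
next
  case (insert j I)
  have "(sum a (insert j I))^n = (a j + sum a I)^n" using insert by simp
  also have "\<dots> = (\<Sum>k\<le>n. of_nat (n choose k) * a j ^ k * (sum a I)^(n-k))"
    by (simp add: binomial_ring)
  also have "\<dots> = (\<Sum>k\<le>n. \<Sum>w\<in>Sc I (n-k). fact n / (fact k * (\<Prod>i\<in>I. fact (w i))) * (a j ^ k * (\<Prod>i\<in>I. a i ^ w i)))"
  proof (rule sum.cong[OF refl])
    fix k assume k: "k \<in> {..n}"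
    have "of_nat (n choose k) * a j ^ k * (sum a I)^(n-k)
        = (\<Sum>w\<in>Sc I (n-k). of_nat (n choose k) * a j ^ k * (fact (n-k) / (\<Prod>i\<in>I. fact (w i)) * (\<Prod>i\<in>I. a i ^ w i)))"
      by (simp add: insert.IH sum_distrib_left)
    also have "\<dots> = (\<Sum>w\<in>Sc I (n-k). fact n / (fact k * (\<Prod>i\<in>I. fact (w i))) * (a j ^ k * (\<Prod>i\<in>I. a i ^ w i)))"
    proof (rule sum.cong[OF refl])
      fix w
      have "(of_nat (n choose k) :: real) = fact n / (fact k * fact (n - k))" using k by (simp add: binomial_fact)
      then have h: "(fact n :: real) = fact k * fact (n - k) * of_nat (n choose k)" by (simp add: field_simps)
      have pf: "(\<Prod>i\<in>I. fact (w i)) \<noteq> (0::real)" by (simp add: prod_zero_iff insert.hyps)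
      then show "of_nat (n choose k) * a j ^ k * (fact (n-k) / (\<Prod>i\<in>I. fact (w i)) * (\<Prod>i\<in>I. a i ^ w i))
          = fact n / (fact k * (\<Prod>i\<in>I. fact (w i))) * (a j ^ k * (\<Prod>i\<in>I. a i ^ w i))"
        using pf by (simp add: h field_simps)
    qed
    finally show "of_nat (n choose k) * a j ^ k * (sum a I)^(n-k) = \<dots>" .
  qed
  also have "\<dots> = (\<Sum>(k,w)\<in>(SIGMA k:{..n}. Sc I (n-k)). fact n / (fact k * (\<Prod>i\<in>I. fact (w i))) * (a j ^ k * (\<Prod>i\<in>I. a i ^ w i)))"
    by (rule sum.Sigma) (auto intro: Sc_finite insert.hyps)
  also have "\<dots> = (\<Sum>(k,w)\<in>(SIGMA k:{..n}. Sc I (n-k)). (\<lambda>w. fact n / (\<Prod>i\<in>insert j I. fact (w i)) * (\<Prod>i\<in>insert j I. a i ^ w i)) (w(j:=k)))"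
  proof (rule sum.cong[OF refl], clarify)
    fix k w
    have p1: "(\<Prod>i\<in>insert j I. fact ((w(j:=k)) i)) = (fact k :: real) * (\<Prod>i\<in>I. fact (w i))"
      using insert.hyps by (simp add: prod.insert) (intro prod.cong, auto)
    have p3: "(\<Prod>i\<in>I. a i ^ ((w(j:=k)) i)) = (\<Prod>i\<in>I. a i ^ w i)"
      using insert.hyps by (intro prod.cong) auto
    have p2: "(\<Prod>i\<in>insert j I. a i ^ ((w(j:=k)) i)) = a j ^ k * (\<Prod>i\<in>I. a i ^ w i)"
      by (subst prod.insert[OF insert.hyps], simp only: p3, simp)
    show "fact n / (fact k * (\<Prod>i\<in>I. fact (w i))) * (a j ^ k * (\<Prod>i\<in>I. a i ^ w i))
        = fact n / (\<Prod>i\<in>insert j I. fact ((w(j:=k)) i)) * (\<Prod>i\<in>insert j I. a i ^ ((w(j:=k)) i))"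
      by (simp only: p1 p2)
  qed
  also have "\<dots> = (\<Sum>w\<in>Sc (insert j I) n. fact n / (\<Prod>i\<in>insert j I. fact (w i)) * (\<Prod>i\<in>insert j I. a i ^ w i))"
    unfolding Sc_insert[OF insert.hyps(2) insert.hyps(1)]
    by (subst sum.reindex[OF Sc_inj[OF insert.hyps(2)]]) (simp add: case_prod_beta)
  finally show ?case .
qed

lemma bm_nonneg: "0 \<le> p \<Longrightarrow> p \<le> 1 \<Longrightarrow> 0 \<le> binom_mass L p M"
  unfolding binom_mass_def by simp

lemma bm_zero: "L < M \<Longrightarrow> binom_mass L p M = 0"
  unfolding binom_mass_def by simp

lemma bm_sum: "(\<Sum>M\<le>L. binom_mass L p M) = 1"
proof -
  have "(p + (1 - p))^L = (\<Sum>M\<le>L. binom_mass L p M)"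
    unfolding binom_mass_def binomial_ring by (simp add: mult_ac)
  then show ?thesis by simp
qed

lemma g_mono:
  fixes q p :: real and M L :: nat
  assumes q: "0 \<le> q" "q \<le> p" and pM: "real L * p \<le> real M" and hML: "M \<le> L" and M0: "0 < M"
  shows "q^M * (1-q)^(L-M) \<le> p^M * (1-p)^(L-M)"
proof (rule DERIV_nonneg_imp_nondecreasing[OF q(2), where f="\<lambda>x. x^M * (1-x)^(L-M)"])
  fix x assume x1': "q \<le> x" and x2': "x \<le> p"
  then have x: "q \<le> x \<and> x \<le> p" by simp
  have L0: "0 < L" using M0 hML by simp
  have x0: "0 \<le> x" using x q by simp
  have "real L * x \<le> real L * p" using x by (intro mult_left_mono) auto
  then have xM: "real L * x \<le> real M" using pM by linarith
  have x1: "x \<le> 1"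
  proof (rule ccontr)
    assume "\<not> x \<le> 1"
    then have "real L * 1 < real L * x" using L0 by (intro mult_strict_left_mono) auto
    then show False using xM hML by simp
  qed
  define D where "D = real M * x^(M-1) * (1-x)^(L-M) - x^M * (real (L-M) * (1-x)^(L-M-1))"
  have "((\<lambda>x. x^M * (1-x)^(L-M)) has_real_derivative D) (at x)"
    unfolding D_def by (auto intro!: derivative_eq_intros)
  moreover have "0 \<le> D"
  proof (cases "M = L")
    case True
    then show ?thesis unfolding D_def using x0 by simp
  next
    case False
    then obtain a b where a: "M = Suc a" and b: "L - M = Suc b" using M0 hML
      by (metis Suc_diff_Suc gr0_implies_Suc le_neq_implies_less zero_less_diff)
    have e1: "x^M = x * x^a" by (simp add: a)
    have e2: "(1-x)^(L-M) = (1-x)*(1-x)^b" by (simp add: b)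
    have e3: "M-1 = a" "L-M-1 = b" using a b by simp_all
    have e4: "real (L-M) = real L - real M" using hML by (simp add: of_nat_diff)
    have "D = x^a*(1-x)^b*(real M*(1-x) - (real L - real M)*x)" unfolding D_def e1 e2 e3 e4 by algebra
    also have "real M*(1-x) - (real L - real M)*x = real M - real L * x" by algebra
    finally have "D = x^a * (1-x)^b * (real M - real L * x)" .
    moreover have "0 \<le> x^a * (1-x)^b" using x0 x1 by simp
    ultimately show ?thesis using xM by simp
  qed
  ultimately show "\<exists>y. ((\<lambda>x. x^M * (1-x)^(L-M)) has_real_derivative y) (at x) \<and> 0 \<le> y" by blast
qed

lemma bm_mono:
  assumes "0 \<le> q" "q \<le> p" "real L * p \<le> real M" "M \<le> L" "2 \<le> L"
  shows "binom_mass L q M \<le> binom_mass L p M"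
proof (cases "M = 0")
  case True
  then have "real L * p \<le> 0" using assms by simp
  moreover have "0 \<le> real L * p" using assms by simp
  ultimately have "real L * p = 0" by linarith
  then have "p = 0" using assms by simp
  then have "q = p" using assms by simp
  then show ?thesis by simp
next
  case False
  then show ?thesis unfolding binom_mass_def using g_mono[of q p L M] assms
    by (simp add: mult.assoc mult_left_mono)
qed

definition mterm :: "'b set \<Rightarrow> nat \<Rightarrow> ('b \<Rightarrow> real) \<Rightarrow> ('b \<Rightarrow> nat) \<Rightarrow> real" where
  "mterm I n a w = fact n / (\<Prod>i\<in>I. fact (w i)) * (\<Prod>i\<in>I. a i ^ w i)"

lemma mterm_nonneg: "\<forall>i\<in>I. 0 \<le> a i \<Longrightarrow> 0 \<le> mterm I n a w"
  unfolding mterm_def by (intro mult_nonneg_nonneg divide_nonneg_nonneg prod_nonneg) auto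

lemma chernoff:
  fixes P' f :: "'b \<Rightarrow> real"
  assumes fin: "finite I" and P'0: "\<forall>M\<in>I. 0 \<le> P' M" and l0: "0 \<le> l"
  shows "(\<Sum>w\<in>{w\<in>Sc I n. real n * t \<le> (\<Sum>M\<in>I. real (w M) * f M)}. mterm I n P' w)
     \<le> (\<Sum>M\<in>I. P' M * 2 powr (l * f M))^n / 2 powr (l * t * real n)"
proof -
  let ?c = "\<lambda>M. 2 powr (l * f M)"
  let ?A = "{w\<in>Sc I n. real n * t \<le> (\<Sum>M\<in>I. real (w M) * f M)}"
  have fS: "finite (Sc I n)" using fin by (rule Sc_finite)
  have nn: "\<forall>M\<in>I. 0 \<le> P' M * ?c M" using P'0 by simp
  have "(\<Sum>w\<in>?A. mterm I n P' w) \<le> (\<Sum>w\<in>?A. mterm I n (\<lambda>M. P' M * ?c M) w / 2 powr (l * t * real n))"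
  proof (rule sum_mono)
    fix w assume w: "w \<in> ?A"
    have pc: "(\<Prod>M\<in>I. ?c M ^ w M) = 2 powr (\<Sum>M\<in>I. real (w M) * (l * f M))"
      by (simp add: powr_sum powr_power)
    have "l * (real n * t) \<le> l * (\<Sum>M\<in>I. real (w M) * f M)" using w l0 by (intro mult_left_mono) auto
    also have "\<dots> = (\<Sum>M\<in>I. real (w M) * (l * f M))" by (simp add: sum_distrib_left mult_ac)
    finally have "l * t * real n \<le> (\<Sum>M\<in>I. real (w M) * (l * f M))" by (simp add: mult_ac)
    then have ge1: "1 \<le> (\<Prod>M\<in>I. ?c M ^ w M) / 2 powr (l * t * real n)"
      unfolding pc by simp
    have "mterm I n (\<lambda>M. P' M * ?c M) w = mterm I n P' w * (\<Prod>M\<in>I. ?c M ^ w M)"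
      unfolding mterm_def by (simp add: power_mult_distrib prod.distrib)
    then have eq: "mterm I n (\<lambda>M. P' M * ?c M) w / 2 powr (l * t * real n)
       = mterm I n P' w * ((\<Prod>M\<in>I. ?c M ^ w M) / 2 powr (l * t * real n))" by simp
    show "mterm I n P' w \<le> mterm I n (\<lambda>M. P' M * ?c M) w / 2 powr (l * t * real n)"
      unfolding eq using mult_left_mono[OF ge1 mterm_nonneg[OF P'0]] by simp
  qed
  also have "\<dots> \<le> (\<Sum>w\<in>Sc I n. mterm I n (\<lambda>M. P' M * ?c M) w / 2 powr (l * t * real n))"
    using fS nn by (intro sum_mono2) (auto intro: divide_nonneg_nonneg mterm_nonneg)
  also have "\<dots> = (\<Sum>M\<in>I. P' M * ?c M)^n / 2 powr (l * t * real n)"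
    unfolding multinomial[OF fin] mterm_def by (simp add: sum_divide_distrib)
  finally show ?thesis .
qed

lemma powr_neg_lim: assumes "(c::real) < 0" shows "((\<lambda>x. 2 powr (x * c)) \<longlongrightarrow> 0) at_top"
proof -
  have "filterlim (\<lambda>x::real. (c * ln 2) * x) at_bot at_top"
    using assms by (intro filterlim_tendsto_neg_mult_at_bot[OF tendsto_const] filterlim_ident) (auto intro: mult_neg_pos)
  then have "((\<lambda>x. exp ((c * ln 2) * x)) \<longlongrightarrow> 0) at_top"
    by (rule filterlim_compose[OF exp_at_bot])
  moreover have "(\<lambda>x. exp ((c * ln 2) * x)) = (\<lambda>x. 2 powr (x * c))"
    by (auto simp: powr_def mult_ac)
  ultimately show ?thesis by simp
qed

lemma caseA:
  fixes P P' f :: "'b \<Rightarrow> real" and I :: "'b set" and t :: real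
  assumes fin: "finite I"
    and P0: "\<forall>M. 0 \<le> P M" and Pout: "\<forall>M. M \<notin> I \<longrightarrow> P M = 0" and Psum: "sum P I = 1"
    and P'0: "\<forall>M\<in>I. 0 \<le> P' M"
    and dom: "\<forall>M\<in>I. f M \<noteq> 0 \<longrightarrow> P' M \<le> P M"
    and t0: "0 < t" and n1: "1 \<le> n"
    and eta0: "0 \<le> \<eta>"
    and eta: "\<forall>Q. is_pmf_on I Q \<and> t \<le> expect_on I Q f \<longrightarrow> exp2_neg (real n) (kl_div I Q P) \<le> \<eta>"
    and small: "\<forall>M\<in>I. 0 < P M \<longrightarrow> f M \<le> t"
  shows "(\<Sum>w\<in>{w\<in>Sc I n. real n * t \<le> (\<Sum>M\<in>I. real (w M) * f M)}. mterm I n P' w) \<le> \<eta>"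
proof -
  define E0 where "E0 = {M\<in>I. f M = t}"
  define a where "a = (\<lambda>M. if M \<in> E0 then P' M else 0)"
  define \<pi> where "\<pi> = sum P E0"
  let ?A = "{w\<in>Sc I n. real n * t \<le> (\<Sum>M\<in>I. real (w M) * f M)}"
  have fS: "finite (Sc I n)" using fin by (rule Sc_finite)
  have a0: "\<forall>M\<in>I. 0 \<le> a M" using P'0 unfolding a_def by auto
  have E0I: "E0 \<subseteq> I" unfolding E0_def by auto
  have step1: "mterm I n P' w \<le> mterm I n a w" if w: "w \<in> ?A" for w
  proof (cases "\<exists>M\<in>I. 0 < w M \<and> P' M = 0")
    case True
    then obtain M where M: "M \<in> I" "0 < w M" "P' M = 0" by blast
    have "(\<Prod>i\<in>I. P' i ^ w i) = 0" using M fin by (intro prod_zero) auto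
    then show ?thesis using mterm_nonneg[OF a0] unfolding mterm_def by simp
  next
    case False
    have pos: "0 < P' M" if "M \<in> I" "0 < w M" for M
    proof -
      have "P' M \<noteq> 0" using False that by blast
      moreover have "0 \<le> P' M" using P'0 that by blast
      ultimately show ?thesis by linarith
    qed
    have le: "f M \<le> t" if "M \<in> I" "0 < w M" for M
    proof (cases "f M = 0")
      case True then show ?thesis using t0 by simp
    next
      case False
      then have "P' M \<le> P M" using dom that by blast
      then have "0 < P M" using pos[OF that] by linarith
      then show ?thesis using small that by blast
    qed
    have sw: "(\<Sum>M\<in>I. real (w M)) = real n" using w unfolding Sc_def by auto
    have "(\<Sum>M\<in>I. real (w M) * (t - f M)) = real n * t - (\<Sum>M\<in>I. real (w M) * f M)"
      using sw by (simp add: algebra_simps sum_subtractf sum_distrib_left[symmetric])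
    also have "\<dots> \<le> 0" using w by simp
    finally have s0: "(\<Sum>M\<in>I. real (w M) * (t - f M)) \<le> 0" .
    have nn: "\<forall>M\<in>I. 0 \<le> real (w M) * (t - f M)"
    proof
      fix M assume M: "M \<in> I"
      show "0 \<le> real (w M) * (t - f M)"
      proof (cases "w M = 0")
        case False then show ?thesis using le[OF M] by simp
      qed simp
    qed
    have "(\<Sum>M\<in>I. real (w M) * (t - f M)) = 0" using s0 nn by (intro antisym[OF s0] sum_nonneg) blast
    then have z: "\<forall>M\<in>I. real (w M) * (t - f M) = 0"
      using sum_nonneg_eq_0_iff[OF fin, of "\<lambda>M. real (w M) * (t - f M)"] nn by blast
    have "(\<Prod>i\<in>I. P' i ^ w i) = (\<Prod>i\<in>I. a i ^ w i)"
    proof (rule prod.cong[OF refl])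
      fix M assume M: "M \<in> I"
      show "P' M ^ w M = a M ^ w M"
      proof (cases "w M = 0")
        case False
        then have "f M = t" using z M by fastforce
        then show ?thesis using M unfolding a_def E0_def by simp
      qed simp
    qed
    then show ?thesis unfolding mterm_def by simp
  qed
  have "(\<Sum>w\<in>?A. mterm I n P' w) \<le> (\<Sum>w\<in>?A. mterm I n a w)" using step1 by (rule sum_mono)
  also have "\<dots> \<le> (\<Sum>w\<in>Sc I n. mterm I n a w)"
    using fS a0 by (intro sum_mono2) (auto intro: mterm_nonneg)
  also have "\<dots> = (sum a I)^n" unfolding multinomial[OF fin] mterm_def ..
  also have "sum a I = sum P' E0"
    unfolding a_def using E0I fin by (simp add: sum.If_cases Int_absorb1)
  also have "(sum P' E0)^n \<le> \<pi>^n"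
  proof (rule power_mono)
    show "sum P' E0 \<le> \<pi>" unfolding \<pi>_def
      using dom t0 E0I by (intro sum_mono) (auto simp: E0_def)
    show "0 \<le> sum P' E0" using P'0 E0I by (intro sum_nonneg) auto
  qed
  also have "\<pi>^n \<le> \<eta>"
  proof (cases "\<pi> = 0")
    case True then show ?thesis using n1 eta0 by (simp add: zero_power)
  next
    case False
    have pi0: "0 < \<pi>" using False P0 unfolding \<pi>_def by (simp add: sum_nonneg order_le_neq_trans)
    define Q where "Q = (\<lambda>M. if M \<in> E0 then P M / \<pi> else 0)"
    have Qpmf: "is_pmf_on I Q"
      unfolding is_pmf_on_def
    proof (intro conjI allI impI)
      fix M show "0 \<le> Q M" unfolding Q_def using P0 pi0 by simp
    next
      fix M assume "M \<notin> I" then show "Q M = 0" unfolding Q_def using E0I by auto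
    next
      have "sum Q I = sum (\<lambda>M. P M / \<pi>) E0"
        unfolding Q_def using E0I fin by (simp add: sum.If_cases Int_absorb1)
      also have "\<dots> = 1" using pi0 unfolding \<pi>_def by (simp add: sum_divide_distrib[symmetric])
      finally show "sum Q I = 1" .
    qed
    have "expect_on I Q f = (\<Sum>M\<in>I. if M \<in> E0 then P M / \<pi> * t else 0)"
      unfolding expect_on_def Q_def by (intro sum.cong) (auto simp: E0_def)
    also have "\<dots> = sum (\<lambda>M. P M / \<pi> * t) E0"
      using E0I fin by (simp add: sum.If_cases Int_absorb1)
    also have "\<dots> = t" using pi0 unfolding \<pi>_def by (simp add: sum_distrib_right[symmetric] sum_divide_distrib[symmetric])
    finally have Qexp: "t \<le> expect_on I Q f" by simp
    have noinf: "\<not> (\<exists>M\<in>I. Q M > 0 \<and> P M = 0)" unfolding Q_def by auto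
    have "(\<Sum>M\<in>I. if Q M = 0 then 0 else Q M * log 2 (Q M / P M)) = (\<Sum>M\<in>I. Q M * log 2 (1 / \<pi>))"
    proof (rule sum.cong[OF refl])
      fix M assume M: "M \<in> I"
      show "(if Q M = 0 then 0 else Q M * log 2 (Q M / P M)) = Q M * log 2 (1 / \<pi>)"
      proof (cases "Q M = 0")
        case False
        then have "M \<in> E0" "P M \<noteq> 0" unfolding Q_def by (auto split: if_splits)
        then show ?thesis using False pi0 unfolding Q_def by simp
      qed simp
    qed
    also have "\<dots> = sum Q I * log 2 (1 / \<pi>)" by (rule sum_distrib_right[symmetric])
    also have "\<dots> = - log 2 \<pi>" using Qpmf pi0 unfolding is_pmf_on_def
      by (simp add: log_divide)
    finally have kl: "kl_div I Q P = ereal (- log 2 \<pi>)" unfolding kl_div_def using noinf by simp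
    have "exp2_neg (real n) (kl_div I Q P) = \<pi>^n"
    proof -
      have "exp2_neg (real n) (kl_div I Q P) = 2 powr (real n * log 2 \<pi>)"
        unfolding kl exp2_neg_def by simp
      also have "\<dots> = (2 powr (log 2 \<pi>))^n" by (simp add: powr_power)
      also have "\<dots> = \<pi>^n" using pi0 by simp
      finally show ?thesis .
    qed
    then show ?thesis using eta Qpmf Qexp by metis
  qed
  finally show ?thesis .
qed

lemma dominate:
  fixes P P' f :: "'b \<Rightarrow> real"
  assumes fin: "finite I" and P0: "\<forall>M. 0 \<le> P M" and Psum: "sum P I = 1"
    and P'sum: "sum P' I = 1" and f0: "\<forall>M\<in>I. 0 \<le> f M"
    and dom: "\<forall>M\<in>I. f M \<noteq> 0 \<longrightarrow> P' M \<le> P M" and l0: "0 \<le> l"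
  shows "(\<Sum>M\<in>I. P' M * 2 powr (l * f M)) \<le> (\<Sum>M\<in>I. P M * 2 powr (l * f M))"
proof -
  have "(\<Sum>M\<in>I. P' M * (2 powr (l * f M) - 1)) \<le> (\<Sum>M\<in>I. P M * (2 powr (l * f M) - 1))"
  proof (rule sum_mono)
    fix M assume M: "M \<in> I"
    show "P' M * (2 powr (l * f M) - 1) \<le> P M * (2 powr (l * f M) - 1)"
    proof (cases "f M = 0")
      case False
      have "0 \<le> l * f M" using l0 f0 M by simp
      then have "1 \<le> 2 powr (l * f M)" by (simp add: ge_one_powr_ge_zero)
      then show ?thesis using dom M False by (intro mult_right_mono) auto
    qed simp
  qed
  then show ?thesis using Psum P'sum by (simp add: algebra_simps sum_subtractf)
qed

lemma caseB:
  fixes P P' f :: "'b \<Rightarrow> real" and I :: "'b set" and t :: real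
  assumes fin: "finite I"
    and P0: "\<forall>M. 0 \<le> P M" and Pout: "\<forall>M. M \<notin> I \<longrightarrow> P M = 0" and Psum: "sum P I = 1"
    and P'0: "\<forall>M\<in>I. 0 \<le> P' M" and P'sum: "sum P' I = 1" and f0: "\<forall>M\<in>I. 0 \<le> f M"
    and dom: "\<forall>M\<in>I. f M \<noteq> 0 \<longrightarrow> P' M \<le> P M"
    and tE: "expect_on I P f < t"
    and eta: "\<forall>Q. is_pmf_on I Q \<and> t \<le> expect_on I Q f \<longrightarrow> exp2_neg (real n) (kl_div I Q P) \<le> \<eta>"
    and M0: "M0 \<in> I" "0 < P M0" "t < f M0" and big: "\<forall>M\<in>I. 0 < P M \<longrightarrow> f M \<le> f M0"
  shows "(\<Sum>w\<in>{w\<in>Sc I n. real n * t \<le> (\<Sum>M\<in>I. real (w M) * f M)}. mterm I n P' w) \<le> \<eta>"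
proof -
  define k where "k = (\<lambda>l. \<Sum>M\<in>I. P M * (f M - t) * 2 powr (l * f M))"
  have ksplit: "k l = (\<Sum>M\<in>I. P M * f M * 2 powr (l * f M)) - t * (\<Sum>M\<in>I. P M * 2 powr (l * f M))" for l
    unfolding k_def by (simp add: algebra_simps sum_subtractf sum_distrib_left)
  have k0: "k 0 < 0" using tE Psum unfolding ksplit expect_on_def by simp
  define r where "r = (\<lambda>l. \<Sum>M\<in>I. P M * (f M - t) * 2 powr (l * (f M - f M0)))"
  define R where "R = (\<Sum>M\<in>I. if f M = f M0 then P M * (f M - t) else 0)"
  have "(r \<longlongrightarrow> R) at_top"
    unfolding r_def R_def
  proof (rule tendsto_sum)
    fix M assume M: "M \<in> I"
    show "((\<lambda>l. P M * (f M - t) * 2 powr (l * (f M - f M0))) \<longlongrightarrow> (if f M = f M0 then P M * (f M - t) else 0)) at_top"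
    proof (cases "f M = f M0")
      case True then show ?thesis by simp
    next
      case False
      show ?thesis
      proof (cases "P M = 0")
        case True then show ?thesis using False by simp
      next
        case PM: False
        then have "0 < P M" using P0 by (simp add: order_le_neq_trans)
        then have "f M < f M0" using big M False by force
        then have "((\<lambda>l. 2 powr (l * (f M - f M0))) \<longlongrightarrow> 0) at_top" by (intro powr_neg_lim) simp
        then have "((\<lambda>l. P M * (f M - t) * 2 powr (l * (f M - f M0))) \<longlongrightarrow> P M * (f M - t) * 0) at_top"
          by (rule tendsto_mult_left)
        then show ?thesis using False by simp
      qed
    qed
  qed
  moreover have "0 < R"
  proof -
    have nn: "\<forall>M\<in>I. 0 \<le> (if f M = f M0 then P M * (f M - t) else 0)" using P0 M0 by auto
    have "P M0 * (f M0 - t) \<le> R" unfolding R_def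
      using member_le_sum[OF M0(1), of "\<lambda>M. if f M = f M0 then P M * (f M - t) else 0"] nn fin by auto
    moreover have "0 < P M0 * (f M0 - t)" using M0 by simp
    ultimately show ?thesis by linarith
  qed
  ultimately have "eventually (\<lambda>l. 0 < r l) at_top" by (rule order_tendstoD(1))
  then obtain N where N: "\<And>l. N \<le> l \<Longrightarrow> 0 < r l" by (auto simp: eventually_at_top_linorder)
  define l1 where "l1 = max N 0"
  have l1: "0 \<le> l1" "0 < r l1" using N unfolding l1_def by auto
  have "k l1 = 2 powr (l1 * f M0) * r l1"
    unfolding k_def r_def sum_distrib_left
  proof (rule sum.cong[OF refl])
    fix M
    have "2 powr (l1 * f M0) * 2 powr (l1 * (f M - f M0)) = 2 powr (l1 * f M)"
      by (simp add: powr_add[symmetric] algebra_simps)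
    then show "P M * (f M - t) * 2 powr (l1 * f M) = 2 powr (l1 * f M0) * (P M * (f M - t) * 2 powr (l1 * (f M - f M0)))"
      by (metis mult.assoc mult.commute)
  qed
  then have kl1: "0 \<le> k l1" using l1 by simp
  have "continuous_on {0..l1} k" unfolding k_def by (intro continuous_intros) auto
  then obtain ls where ls: "0 \<le> ls" "ls \<le> l1" "k ls = 0" using IVT'[of k 0 0 l1] k0 kl1 l1 by auto
  define c where "c = (\<lambda>M. 2 powr (ls * f M))"
  define Z where "Z = (\<Sum>M\<in>I. P M * c M)"
  have c0: "0 < c M" for M unfolding c_def by simp
  have Z0: "0 < Z"
  proof -
    have "P M0 * c M0 \<le> Z" unfolding Z_def
      using member_le_sum[OF M0(1), of "\<lambda>M. P M * c M"] P0 c0 fin by (simp add: less_imp_le)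
    moreover have "0 < P M0 * c M0" using M0 c0 by simp
    ultimately show ?thesis by linarith
  qed
  have kZ: "(\<Sum>M\<in>I. P M * f M * c M) = t * Z" using ls(3) unfolding ksplit Z_def c_def by simp
  define Q where "Q = (\<lambda>M. P M * c M / Z)"
  have Qpmf: "is_pmf_on I Q" unfolding is_pmf_on_def
  proof (intro conjI allI impI)
    fix M show "0 \<le> Q M" unfolding Q_def using P0 c0 Z0 by (simp add: less_imp_le)
  next
    fix M assume "M \<notin> I" then show "Q M = 0" unfolding Q_def using Pout by simp
  next
    show "sum Q I = 1" unfolding Q_def using Z0 by (simp add: sum_divide_distrib[symmetric] Z_def)
  qed
  have EQ: "expect_on I Q f = t"
  proof -
    have "expect_on I Q f = (\<Sum>M\<in>I. P M * f M * c M) / Z"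
      unfolding expect_on_def Q_def by (simp add: sum_divide_distrib[symmetric] algebra_simps)
    then show ?thesis using kZ Z0 by simp
  qed
  have noinf: "\<not> (\<exists>M\<in>I. Q M > 0 \<and> P M = 0)" unfolding Q_def by auto
  have "(\<Sum>M\<in>I. if Q M = 0 then 0 else Q M * log 2 (Q M / P M)) = (\<Sum>M\<in>I. Q M * (ls * f M - log 2 Z))"
  proof (rule sum.cong[OF refl])
    fix M assume M: "M \<in> I"
    show "(if Q M = 0 then 0 else Q M * log 2 (Q M / P M)) = Q M * (ls * f M - log 2 Z)"
    proof (cases "Q M = 0")
      case False
      then have PM: "P M \<noteq> 0" unfolding Q_def by auto
      then have "Q M / P M = c M / Z" unfolding Q_def by simp
      then have "log 2 (Q M / P M) = ls * f M - log 2 Z"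
        using c0 Z0 by (simp add: log_divide c_def)
      then show ?thesis using False by simp
    qed simp
  qed
  also have "\<dots> = ls * expect_on I Q f - log 2 Z * sum Q I"
    unfolding expect_on_def by (simp add: algebra_simps sum_subtractf sum_distrib_left sum_distrib_right)
  also have "\<dots> = ls * t - log 2 Z" using EQ Qpmf unfolding is_pmf_on_def by simp
  finally have kl: "kl_div I Q P = ereal (ls * t - log 2 Z)" unfolding kl_div_def using noinf by simp
  have ex: "exp2_neg (real n) (kl_div I Q P) = Z^n / 2 powr (ls * t * real n)"
  proof -
    have "exp2_neg (real n) (kl_div I Q P) = 2 powr (real n * log 2 Z - ls * t * real n)"
      unfolding kl exp2_neg_def by (simp add: algebra_simps)
    also have "\<dots> = 2 powr (real n * log 2 Z) / 2 powr (ls * t * real n)" by (rule powr_diff)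
    also have "2 powr (real n * log 2 Z) = (2 powr (log 2 Z))^n" by (simp add: powr_power)
    also have "\<dots> = Z^n" using Z0 by simp
    finally show ?thesis .
  qed
  have "(\<Sum>w\<in>{w\<in>Sc I n. real n * t \<le> (\<Sum>M\<in>I. real (w M) * f M)}. mterm I n P' w)
     \<le> (\<Sum>M\<in>I. P' M * 2 powr (ls * f M))^n / 2 powr (ls * t * real n)"
    by (rule chernoff[OF fin P'0 ls(1)])
  also have "\<dots> \<le> Z^n / 2 powr (ls * t * real n)"
  proof (intro divide_right_mono power_mono)
    show "(\<Sum>M\<in>I. P' M * 2 powr (ls * f M)) \<le> Z" unfolding Z_def c_def
      by (rule dominate[OF fin P0 Psum P'sum f0 dom ls(1)])
    show "0 \<le> (\<Sum>M\<in>I. P' M * 2 powr (ls * f M))" using P'0 by (intro sum_nonneg) simp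
  qed simp
  also have "\<dots> \<le> \<eta>" using eta Qpmf EQ ex by (metis order_refl)
  finally show ?thesis .
qed

lemma fiber_sum:
  assumes "finite A" "\<forall>k<N. g k \<in> A"
  shows "(\<Sum>a\<in>A. real (card {k. k < N \<and> g k = a})) = real N"
proof -
  have "(\<Sum>a\<in>A. \<Sum>k\<in>{k. k \<in> {..<N} \<and> g k = a}. (1::real)) = (\<Sum>k\<in>{..<N}. 1)"
    using assms by (intro sum.group) auto
  then show ?thesis by simp
qed

lemma emp_pmf:
  assumes "finite A" "1 \<le> N" "\<forall>k<N. g k \<in> A"
  shows "is_pmf_on A (emp_type N g)"
  unfolding is_pmf_on_def
proof (intro conjI allI impI)
  fix a show "0 \<le> emp_type N g a" unfolding emp_type_def by simp
next
  fix a assume "a \<notin> A"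
  then have "{k. k < N \<and> g k = a} = {}" using assms by auto
  then show "emp_type N g a = 0" unfolding emp_type_def by simp
next
  have "sum (emp_type N g) A = (\<Sum>a\<in>A. real (card {k. k < N \<and> g k = a})) / real N"
    unfolding emp_type_def by (simp add: sum_divide_distrib)
  then show "sum (emp_type N g) A = 1" using fiber_sum[OF assms(1,3)] assms(2) by simp
qed

lemma marg:
  assumes "\<forall>k<N. u k \<le> 1 \<and> x k \<le> 1"
  shows "marginal_M (emp_type N (\<lambda>k. (m k, u k, x k))) M = emp_type N m M"
proof -
  let ?S = "{k. k < N \<and> m k = M}"
  have "(\<Sum>U\<le>1. \<Sum>X\<le>1. real (card {k. k < N \<and> (m k, u k, x k) = (M, U, X)}))
      = (\<Sum>(U,X)\<in>{..1::nat}\<times>{..1::nat}. real (card {k. k \<in> ?S \<and> (u k, x k) = (U, X)}))"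
  proof -
    have e: "{k. k < N \<and> (m k, u k, x k) = (M, U, X)} = {k. k \<in> ?S \<and> (u k, x k) = (U, X)}" for U X
      by auto
    show ?thesis unfolding e by (rule sum.cartesian_product)
  qed
  also have "\<dots> = (\<Sum>UX\<in>{..1::nat}\<times>{..1::nat}. \<Sum>k\<in>{k. k \<in> ?S \<and> (u k, x k) = UX}. (1::real))"
    by (rule sum.cong[OF refl], clarify, simp)
  also have "\<dots> = (\<Sum>k\<in>?S. 1)"
    using assms by (intro sum.group) auto
  finally have "(\<Sum>U\<le>1. \<Sum>X\<le>1. real (card {k. k < N \<and> (m k, u k, x k) = (M, U, X)})) = real (card ?S)"
    by simp
  then show ?thesis unfolding marginal_M_def emp_type_def
    by (simp add: sum_divide_distrib[symmetric])
qed

theorem proposition1: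
  fixes L Nem :: nat and psrc \<eta>1 \<delta>1 :: real and nu :: "nat \<Rightarrow> real"
    and Pr :: "'a pmf" and v :: "'a \<Rightarrow> nat \<Rightarrow> nat" and N :: "'a \<Rightarrow> nat"
    and m u x :: "'a \<Rightarrow> nat \<Rightarrow> nat"
  assumes L: "L \<ge> 2" and Nem: "Nem \<ge> 1" and psrc: "0 \<le> psrc" "psrc \<le> 1"
    and nu_nonneg: "\<forall>M\<le>L. 0 \<le> nu M"
    and nu_zero: "\<forall>M\<le>L. real M < real L * psrc \<longrightarrow> nu M = 0"
    and eta_nonneg: "0 \<le> \<eta>1"
    and eta: "\<forall>Q\<in>calQ L psrc nu \<delta>1. exp2_neg (real Nem) (kl_div {..L} Q (binom_mass L psrc)) \<le> \<eta>1"
    and v_sum: "\<forall>\<omega>. (\<Sum>M\<le>L. v \<omega> M) = Nem"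
    and in_W: "\<forall>\<omega> k. 1 \<le> N \<omega> \<longrightarrow> k < N \<omega> \<longrightarrow> (m \<omega> k, u \<omega> k, x \<omega> k) \<in> Walph L"
    and condA: "\<exists>podd. 0 \<le> podd \<and> podd \<le> psrc \<and>
       (\<forall>w::nat \<Rightarrow> nat. (\<Sum>M\<le>L. w M) = Nem \<longrightarrow>
          measure_pmf.prob Pr {\<omega>. \<forall>M\<le>L. v \<omega> M = w M}
            = fact Nem / (\<Prod>M\<le>L. fact (w M)) * (\<Prod>M\<le>L. binom_mass L podd M ^ w M))"
    and condB: "\<forall>M\<le>L.
       measure_pmf.prob Pr {\<omega>. 1 \<le> N \<omega> \<and> real (N \<omega>) * emp_type (N \<omega>) (m \<omega>) M \<le> real (v \<omega> M)}
         / measure_pmf.prob Pr {\<omega>. 1 \<le> N \<omega>} = 1"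
  shows "measure_pmf.prob Pr {\<omega>. 1 \<le> N \<omega> \<and>
            emp_type (N \<omega>) (\<lambda>k. (m \<omega> k, u \<omega> k, x \<omega> k)) \<notin> calP L Nem (N \<omega>) psrc nu \<delta>1}
         \<le> \<eta>1"
proof -
  obtain podd where podd: "0 \<le> podd" "podd \<le> psrc"
    and dist: "\<And>w::nat \<Rightarrow> nat. (\<Sum>M\<le>L. w M) = Nem \<Longrightarrow>
          measure_pmf.prob Pr {\<omega>. \<forall>M\<le>L. v \<omega> M = w M}
            = fact Nem / (\<Prod>M\<le>L. fact (w M)) * (\<Prod>M\<le>L. binom_mass L podd M ^ w M)"
    using condA by blast
  define P where "P = binom_mass L psrc"
  define P' where "P' = binom_mass L podd"
  define I where "I = {..L}"
  define t where "t = expect_on I P nu + \<delta>1"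
  have fin: "finite I" unfolding I_def by simp
  have P0: "\<forall>M. 0 \<le> P M" unfolding P_def using psrc bm_nonneg by blast
  have Pout: "\<forall>M. M \<notin> I \<longrightarrow> P M = 0" unfolding P_def I_def using bm_zero by auto
  have Psum: "sum P I = 1" unfolding P_def I_def by (rule bm_sum)
  have P'0: "\<forall>M\<in>I. 0 \<le> P' M" unfolding P'_def using podd psrc bm_nonneg by auto
  have P'sum: "sum P' I = 1" unfolding P'_def I_def by (rule bm_sum)
  have f0: "\<forall>M\<in>I. 0 \<le> nu M" using nu_nonneg unfolding I_def by auto
  have Ppmf: "is_pmf_on I P" unfolding is_pmf_on_def using P0 Pout Psum by blast
  have E0: "0 \<le> expect_on I P nu" unfolding expect_on_def using P0 f0 by (intro sum_nonneg) auto
  have etaI: "\<forall>Q. is_pmf_on I Q \<and> t \<le> expect_on I Q nu \<longrightarrow> exp2_neg (real Nem) (kl_div I Q P) \<le> \<eta>1"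
    using eta unfolding calQ_def t_def I_def P_def by auto
  show ?thesis
  proof (cases "\<delta>1 \<le> 0")
    case True
    have "kl_div I P P = ereal 0"
    proof -
      have "(\<Sum>a\<in>I. if P a = 0 then 0 else P a * log 2 (P a / P a)) = 0"
        by (intro sum.neutral) auto
      then show ?thesis unfolding kl_div_def by auto
    qed
    then have "exp2_neg (real Nem) (kl_div I P P) = 1" unfolding exp2_neg_def by simp
    moreover have "t \<le> expect_on I P nu" using True unfolding t_def by simp
    ultimately have "1 \<le> \<eta>1" using etaI Ppmf by metis
    then show ?thesis using measure_pmf.prob_le_1 order_trans by blast
  next
    case False
    then have d0: "0 < \<delta>1" by simp
    have tpos: "0 < t" using E0 d0 unfolding t_def by simp
    have tE: "expect_on I P nu < t" using d0 unfolding t_def by simp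
    have n1: "1 \<le> Nem" using Nem .
    have dom: "\<forall>M\<in>I. nu M \<noteq> 0 \<longrightarrow> P' M \<le> P M"
    proof (intro ballI impI)
      fix M assume M: "M \<in> I" and nz: "nu M \<noteq> 0"
      then have "\<not> real M < real L * psrc" using nu_zero unfolding I_def by auto
      then show "P' M \<le> P M" unfolding P'_def P_def using M podd L unfolding I_def
        by (intro bm_mono) auto
    qed
    define A where "A = {w\<in>Sc I Nem. real Nem * t \<le> (\<Sum>M\<in>I. real (w M) * nu M)}"
    have sumA: "(\<Sum>w\<in>A. mterm I Nem P' w) \<le> \<eta>1"
    proof (cases "\<forall>M\<in>I. 0 < P M \<longrightarrow> nu M \<le> t")
      case True
      show ?thesis unfolding A_def by (rule caseA[OF fin P0 Pout Psum P'0 dom tpos n1 eta_nonneg etaI True])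
    next
      case False
      then obtain M1 where M1: "M1 \<in> I" "0 < P M1" "t < nu M1" by force
      define S where "S = {M\<in>I. 0 < P M}"
      have fS: "finite S" using fin unfolding S_def by simp
      have neS: "nu ` S \<noteq> {}" using M1 unfolding S_def by auto
      obtain M0 where M0S: "M0 \<in> S" and M0max: "nu M0 = Max (nu ` S)"
        using Max_in[OF finite_imageI[OF fS] neS] by auto
      have big: "\<forall>M\<in>I. 0 < P M \<longrightarrow> nu M \<le> nu M0"
        unfolding M0max using fS S_def by (auto intro: Max_ge)
      have "nu M1 \<le> nu M0" using big M1 by blast
      then have tM0: "t < nu M0" using M1 by linarith
      have M0: "M0 \<in> I" "0 < P M0" using M0S unfolding S_def by auto
      show ?thesis unfolding A_def
        by (rule caseB[OF fin P0 Pout Psum P'0 P'sum f0 dom tE etaI M0 tM0 big])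
    qed
    define V where "V = (\<lambda>\<omega> M. if M \<le> L then v \<omega> M else 0)"
    have sumV: "(\<Sum>M\<in>I. real (V \<omega> M) * nu M) = (\<Sum>M\<in>I. real (v \<omega> M) * nu M)" for \<omega>
      unfolding V_def I_def by (intro sum.cong) auto
    have VS: "V \<omega> \<in> Sc I Nem" for \<omega>
    proof -
      have "sum (V \<omega>) I = sum (v \<omega>) {..L}" unfolding V_def I_def by (intro sum.cong) auto
      then show ?thesis unfolding Sc_def using v_sum unfolding V_def I_def by auto
    qed
    define E' where "E' = {\<omega>. real Nem * t \<le> (\<Sum>M\<in>I. real (v \<omega> M) * nu M)}"
    have E'eq: "E' = V -` A" unfolding E'_def A_def using VS sumV by auto
    have finA: "finite A" unfolding A_def using Sc_finite[OF fin] by simp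
    have PrE': "measure_pmf.prob Pr E' = (\<Sum>w\<in>A. mterm I Nem P' w)"
    proof -
      have "measure_pmf.prob Pr E' = measure_pmf.prob (map_pmf V Pr) A" unfolding E'eq by simp
      also have "\<dots> = (\<Sum>w\<in>A. pmf (map_pmf V Pr) w)" by (rule measure_measure_pmf_finite[OF finA])
      also have "\<dots> = (\<Sum>w\<in>A. mterm I Nem P' w)"
      proof (rule sum.cong[OF refl])
        fix w assume w: "w \<in> A"
        then have wS: "w \<in> Sc I Nem" unfolding A_def by simp
        have "V -` {w} = {\<omega>. \<forall>M\<le>L. v \<omega> M = w M}"
        proof (intro set_eqI iffI)
          fix \<omega> assume "\<omega> \<in> V -` {w}"
          then show "\<omega> \<in> {\<omega>. \<forall>M\<le>L. v \<omega> M = w M}" unfolding V_def by auto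
        next
          fix \<omega> assume a: "\<omega> \<in> {\<omega>. \<forall>M\<le>L. v \<omega> M = w M}"
          have "V \<omega> = w"
          proof
            fix M show "V \<omega> M = w M" using a wS unfolding V_def Sc_def I_def by auto
          qed
          then show "\<omega> \<in> V -` {w}" by simp
        qed
        moreover have "(\<Sum>M\<le>L. w M) = Nem" using wS unfolding Sc_def I_def by simp
        ultimately show "pmf (map_pmf V Pr) w = mterm I Nem P' w"
          unfolding pmf_map mterm_def I_def P'_def using dist by simp
      qed
      finally show ?thesis .
    qed
    define D where "D = {\<omega>. 1 \<le> N \<omega>}"
    define AM where "AM = (\<lambda>M. {\<omega>. 1 \<le> N \<omega> \<and> real (N \<omega>) * emp_type (N \<omega>) (m \<omega>) M \<le> real (v \<omega> M)})"
    define B where "B = (\<Union>M\<in>{..L}. D - AM M)"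
    have PrB: "measure_pmf.prob Pr B = 0"
    proof -
      have z: "measure_pmf.prob Pr (D - AM M) = 0" if M: "M \<in> {..L}" for M
      proof -
        have "measure_pmf.prob Pr (AM M) / measure_pmf.prob Pr D = 1"
          using condB M unfolding AM_def D_def by auto
        then have "measure_pmf.prob Pr (AM M) = measure_pmf.prob Pr D"
          by (metis div_0 divide_eq_1_iff zero_neq_one)
        moreover have "AM M \<subseteq> D" unfolding AM_def D_def by auto
        ultimately show ?thesis by (simp add: measure_pmf.finite_measure_Diff)
      qed
      have "measure_pmf.prob Pr B \<le> (\<Sum>M\<in>{..L}. measure_pmf.prob Pr (D - AM M))"
        unfolding B_def by (intro measure_pmf.finite_measure_subadditive_finite) auto
      also have "\<dots> = 0" using z by simp
      finally show ?thesis using measure_nonneg[of "measure_pmf Pr" B] by linarith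
    qed
    have finW: "finite (Walph L)"
    proof -
      have "Walph L \<subseteq> {..L} \<times> {..1} \<times> {..1}" unfolding Walph_def by auto
      then show ?thesis by (rule finite_subset) simp
    qed
    have sub: "{\<omega>. 1 \<le> N \<omega> \<and>
            emp_type (N \<omega>) (\<lambda>k. (m \<omega> k, u \<omega> k, x \<omega> k)) \<notin> calP L Nem (N \<omega>) psrc nu \<delta>1} \<subseteq> E' \<union> B"
    proof
      fix \<omega> assume "\<omega> \<in> {\<omega>. 1 \<le> N \<omega> \<and>
            emp_type (N \<omega>) (\<lambda>k. (m \<omega> k, u \<omega> k, x \<omega> k)) \<notin> calP L Nem (N \<omega>) psrc nu \<delta>1}"
      then have N1: "1 \<le> N \<omega>" and nP: "emp_type (N \<omega>) (\<lambda>k. (m \<omega> k, u \<omega> k, x \<omega> k)) \<notin> calP L Nem (N \<omega>) psrc nu \<delta>1"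
        by auto
      show "\<omega> \<in> E' \<union> B"
      proof (cases "\<omega> \<in> B")
        case False
        then have le: "\<forall>M\<le>L. real (N \<omega>) * emp_type (N \<omega>) (m \<omega>) M \<le> real (v \<omega> M)"
          using N1 unfolding B_def D_def AM_def by auto
        have inW: "\<forall>k<N \<omega>. (m \<omega> k, u \<omega> k, x \<omega> k) \<in> Walph L" using in_W N1 by auto
        then have ux: "\<forall>k<N \<omega>. u \<omega> k \<le> 1 \<and> x \<omega> k \<le> 1" unfolding Walph_def by auto
        have pmf: "is_pmf_on (Walph L) (emp_type (N \<omega>) (\<lambda>k. (m \<omega> k, u \<omega> k, x \<omega> k)))"
          by (rule emp_pmf[OF finW N1 inW])
        have mg: "marginal_M (emp_type (N \<omega>) (\<lambda>k. (m \<omega> k, u \<omega> k, x \<omega> k))) = emp_type (N \<omega>) (m \<omega>)"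
          by (rule ext, rule marg[OF ux])
        have gt: "real Nem / real (N \<omega>) * t < expect_on I (emp_type (N \<omega>) (m \<omega>)) nu"
        proof -
          have "\<not> expect_on {..L} (marginal_M (emp_type (N \<omega>) (\<lambda>k. (m \<omega> k, u \<omega> k, x \<omega> k)))) nu
              \<le> real Nem / real (N \<omega>) * (expect_on {..L} (binom_mass L psrc) nu + \<delta>1)"
            using nP pmf unfolding calP_def by auto
          then show ?thesis unfolding mg t_def I_def P_def by simp
        qed
        have Npos: "0 < real (N \<omega>)" using N1 by simp
        have "real Nem * t = real (N \<omega>) * (real Nem / real (N \<omega>) * t)" using Npos by simp
        also have "\<dots> < real (N \<omega>) * expect_on I (emp_type (N \<omega>) (m \<omega>)) nu"
          by (rule mult_strict_left_mono[OF gt Npos])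
        also have "\<dots> = (\<Sum>M\<in>I. (real (N \<omega>) * emp_type (N \<omega>) (m \<omega>) M) * nu M)"
          unfolding expect_on_def by (simp add: sum_distrib_left mult_ac)
        also have "\<dots> \<le> (\<Sum>M\<in>I. real (v \<omega> M) * nu M)"
          using le f0 unfolding I_def by (intro sum_mono mult_right_mono) auto
        finally show ?thesis unfolding E'_def by simp
      qed simp
    qed
    have "measure_pmf.prob Pr {\<omega>. 1 \<le> N \<omega> \<and>
            emp_type (N \<omega>) (\<lambda>k. (m \<omega> k, u \<omega> k, x \<omega> k)) \<notin> calP L Nem (N \<omega>) psrc nu \<delta>1}
        \<le> measure_pmf.prob Pr (E' \<union> B)"
      using sub by (intro measure_pmf.finite_measure_mono) auto
    also have "\<dots> \<le> measure_pmf.prob Pr E' + measure_pmf.prob Pr B"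
      by (intro measure_subadditive) (auto simp: measure_pmf.emeasure_eq_measure)
    also have "\<dots> \<le> \<eta>1" using PrB PrE' sumA by simp
    finally show ?thesis .
  qed
qed

end
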